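(* Consider any economy (in the setting described in the context, so in particular every market $\mathcal{M}(\theta)$, $\theta\in\Theta$, has a unique stable matching). Then there exists a Bayesian Nash equilibrium with truthfully reporting firms, in which every worker uses a weakly undominated strategy, whose outcome in each state $\theta$ is the unique stable matching (for the true preferences) of $\mathcal{M}(\theta)$.
   Context: Matching market: $\mathcal{M}=(F,W,U)$ with finite firms $F=\{f_i\}_{i\in[m]}$, finite workers $W=\{w_j\}_{j\in[n]}$, and utilities $u^f_{ij}$ (firm $f_i$ from worker $w_j$) and $u^w_{ij}$ (worker $w_j$ from firm $f_i$); being unmatched gives utility $0$; all preferences are strict and all firm–worker pairs are mutually acceptable (all match utilities are $>0$). A matching is stable if no agent is matched to an unacceptable partner and no firm–worker pair both strictly prefer each other to their assigned partners. An economy is $\mathcal{E}=(F,W,\{U(\theta)\}_{\theta\in\Theta},\Theta,\Psi)$ with finite state set $\Theta$, full-support prior $\Psi$, and market $\mathcal{M}(\theta)=(F,W,U(\theta))$ in state $\theta$; workers' utilities do not depend on the state ($u^w_{ij}(\theta)=u^w_{ij}(\theta')$ for all $\theta,\theta'$), while firms' utilities may. Standing assumption: each market $\mathcal{M}(\theta)$ has a unique stable matching. Game: a state $\theta$ is drawn according to $\Psi$; firms observe $\theta$ (and their utilities in $\theta$); each worker knows only his own (state-independent) preferences. All agents simultaneously submit rank-ordered lists of partners they declare acceptable, and the firm-proposing Deferred Acceptance algorithm is run on the reported lists. Firms are assumed to report truthfully; a worker's strategy is a single rank-ordered list, and a Bayesian Nash equilibrium (BNE) is a profile in which each worker's list maximizes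 his expected utility (under $\Psi$) given the others' strategies. A worker's strategy is weakly dominated if another list gives him weakly higher utility in every state against every profile of others' reports and strictly higher utility in some case. The outcome of a BNE is the matching it produces in each state. *)

theory Defs
  imports Complex_Main
begin

type_synonym ('w, 'f) matching = "'w \<Rightarrow> 'f option"

definition is_matching :: "('w, 'f) matching \<Rightarrow> bool" where
  "is_matching \<mu> \<longleftrightarrow> (\<forall>j j' i. \<mu> j = Some i \<and> \<mu> j' = Some i \<longrightarrow> j = j')"

definition wutil :: "('f \<Rightarrow> 'w \<Rightarrow> real) \<Rightarrow> ('w, 'f) matching \<Rightarrow> 'w \<Rightarrow> real" where
  "wutil uw \<mu> j = (case \<mu> j of None \<Rightarrow> 0 | Some i \<Rightarrow> uw i j)"

definition futil :: "('f \<Rightarrow> 'w \<Rightarrow> real) \<Rightarrow> ('w, 'f) matching \<Rightarrow> 'f \<Rightarrow> real" where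
  "futil uf \<mu> i = (if \<exists>j. \<mu> j = Some i then uf i (THE j. \<mu> j = Some i) else 0)"

definition stable :: "('f \<Rightarrow> 'w \<Rightarrow> real) \<Rightarrow> ('f \<Rightarrow> 'w \<Rightarrow> real) \<Rightarrow> ('w, 'f) matching \<Rightarrow> bool" where
  "stable uf uw \<mu> \<longleftrightarrow> is_matching \<mu>
     \<and> (\<forall>j i. \<mu> j = Some i \<longrightarrow> uw i j > 0 \<and> uf i j > 0)
     \<and> \<not> (\<exists>i j. futil uf \<mu> i < uf i j \<and> wutil uw \<mu> j < uw i j)"

text \<open>PF i: firm i's reported list (best first); PW j: worker j's reported list
(best first; the firms on it are those declared acceptable). The DA state k
records, for each firm, how many entries of its list it has been rejected by;
firm i currently proposes to PF i ! k i if k i < length (PF i).\<close>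

definition proposes :: "('f \<Rightarrow> 'w list) \<Rightarrow> ('f \<Rightarrow> nat) \<Rightarrow> 'f \<Rightarrow> 'w \<Rightarrow> bool" where
  "proposes PF k i j \<longleftrightarrow> k i < length (PF i) \<and> PF i ! k i = j"

definition held :: "('f \<Rightarrow> 'w list) \<Rightarrow> ('w \<Rightarrow> 'f list) \<Rightarrow> ('f \<Rightarrow> nat) \<Rightarrow> 'w \<Rightarrow> 'f option" where
  "held PF PW k j = find (\<lambda>i. proposes PF k i j) (PW j)"

definition rejected :: "('f \<Rightarrow> 'w list) \<Rightarrow> ('w \<Rightarrow> 'f list) \<Rightarrow> ('f \<Rightarrow> nat) \<Rightarrow> 'f \<Rightarrow> bool" where
  "rejected PF PW k i \<longleftrightarrow> k i < length (PF i) \<and> held PF PW k (PF i ! k i) \<noteq> Some i"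

definition da_step :: "('f \<Rightarrow> 'w list) \<Rightarrow> ('w \<Rightarrow> 'f list) \<Rightarrow> ('f \<Rightarrow> nat) \<Rightarrow> ('f \<Rightarrow> nat)" where
  "da_step PF PW k = (\<lambda>i. if rejected PF PW k i then Suc (k i) else k i)"

text \<open>Each non-terminal round strictly increases the bounded quantity
sum of min (k i) (length (PF i)), so after (sum of list lengths) rounds the algorithm
has terminated (further rounds change nothing).\<close>
definition da_final :: "('f::finite \<Rightarrow> 'w list) \<Rightarrow> ('w \<Rightarrow> 'f list) \<Rightarrow> ('f \<Rightarrow> nat)" where
  "da_final PF PW = (da_step PF PW ^^ (\<Sum>i\<in>UNIV. length (PF i))) (\<lambda>_. 0)"

definition DA :: "('f::finite \<Rightarrow> 'w list) \<Rightarrow> ('w \<Rightarrow> 'f list) \<Rightarrow> ('w, 'f) matching" where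
  "DA PF PW = held PF PW (da_final PF PW)"

definition firm_truth :: "('f \<Rightarrow> 'w::finite \<Rightarrow> real) \<Rightarrow> 'f \<Rightarrow> 'w list" where
  "firm_truth uf i = (SOME L. distinct L \<and> set L = UNIV \<and> sorted_wrt (\<lambda>a b. uf i a > uf i b) L)"

definition valid_profile :: "('w \<Rightarrow> 'f list) \<Rightarrow> bool" where
  "valid_profile \<sigma> \<longleftrightarrow> (\<forall>j. distinct (\<sigma> j))"

definition outcome :: "('th \<Rightarrow> 'f::finite \<Rightarrow> 'w::finite \<Rightarrow> real) \<Rightarrow> ('w \<Rightarrow> 'f list) \<Rightarrow> 'th \<Rightarrow> ('w, 'f) matching" where
  "outcome uf \<sigma> th = DA (firm_truth (uf th)) \<sigma>"

definition exp_util :: "('th::finite \<Rightarrow> 'f::finite \<Rightarrow> 'w::finite \<Rightarrow> real) \<Rightarrow> ('f \<Rightarrow> 'w \<Rightarrow> real)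
    \<Rightarrow> ('th \<Rightarrow> real) \<Rightarrow> ('w \<Rightarrow> 'f list) \<Rightarrow> 'w \<Rightarrow> real" where
  "exp_util uf uw Psi \<sigma> j = (\<Sum>th\<in>UNIV. Psi th * wutil uw (outcome uf \<sigma> th) j)"

definition is_BNE :: "('th::finite \<Rightarrow> 'f::finite \<Rightarrow> 'w::finite \<Rightarrow> real) \<Rightarrow> ('f \<Rightarrow> 'w \<Rightarrow> real)
    \<Rightarrow> ('th \<Rightarrow> real) \<Rightarrow> ('w \<Rightarrow> 'f list) \<Rightarrow> bool" where
  "is_BNE uf uw Psi \<sigma> \<longleftrightarrow> valid_profile \<sigma> \<and>
     (\<forall>j L. distinct L \<longrightarrow> exp_util uf uw Psi (\<sigma>(j := L)) j \<le> exp_util uf uw Psi \<sigma> j)"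

definition weakly_dominated :: "('th::finite \<Rightarrow> 'f::finite \<Rightarrow> 'w::finite \<Rightarrow> real) \<Rightarrow> ('f \<Rightarrow> 'w \<Rightarrow> real)
    \<Rightarrow> 'w \<Rightarrow> 'f list \<Rightarrow> bool" where
  "weakly_dominated uf uw j L \<longleftrightarrow> (\<exists>L'. distinct L' \<and>
     (\<forall>th \<sigma>. valid_profile \<sigma> \<longrightarrow>
        wutil uw (outcome uf (\<sigma>(j := L)) th) j \<le> wutil uw (outcome uf (\<sigma>(j := L')) th) j) \<and>
     (\<exists>th \<sigma>. valid_profile \<sigma> \<and>
        wutil uw (outcome uf (\<sigma>(j := L)) th) j < wutil uw (outcome uf (\<sigma>(j := L')) th) j))"

end

theory Submission
  imports Defs
begin


fun idx :: "'a list \<Rightarrow> 'a \<Rightarrow> nat" where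
  "idx [] x = 0"
| "idx (y # ys) x = (if y = x then 0 else Suc (idx ys x))"

lemma idx_less: "x \<in> set xs \<Longrightarrow> idx xs x < length xs"
  by (induction xs) auto

lemma nth_idx: "x \<in> set xs \<Longrightarrow> xs ! idx xs x = x"
  by (induction xs) auto

lemma idx_nth: "distinct xs \<Longrightarrow> i < length xs \<Longrightarrow> idx xs (xs ! i) = i"
proof (induction xs arbitrary: i)
  case Nil then show ?case by simp
next
  case (Cons y ys) then show ?case
    by (cases i) (auto simp: nth_mem)
qed

lemma idx_inj: "x \<in> set xs \<Longrightarrow> y \<in> set xs \<Longrightarrow> idx xs x = idx xs y \<Longrightarrow> x = y"
  by (metis nth_idx)

lemma find_first_idx:
  assumes "List.find P xs = Some x" "p \<in> set xs" "P p"
  shows "idx xs x \<le> idx xs p"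
  using assms by (induction xs) (auto split: if_splits)

lemma find_in: "List.find P xs = Some x \<Longrightarrow> x \<in> set xs \<and> P x"
  by (induction xs) (auto split: if_splits)

definition ks :: "('f \<Rightarrow> 'w list) \<Rightarrow> ('w \<Rightarrow> 'f list) \<Rightarrow> nat \<Rightarrow> ('f \<Rightarrow> nat)" where
  "ks PF PW s = (da_step PF PW ^^ s) (\<lambda>_. 0)"

lemma ks_0[simp]: "ks PF PW 0 = (\<lambda>_. 0)"
  by (simp add: ks_def)

lemma ks_Suc: "ks PF PW (Suc s) = da_step PF PW (ks PF PW s)"
  by (simp add: ks_def)

lemma da_final_ks: "da_final PF PW = ks PF PW (\<Sum>i\<in>UNIV. length (PF i))"
  by (simp add: da_final_def ks_def)

lemma ks_Suc_p: "ks PF PW (Suc s) p = (if rejected PF PW (ks PF PW s) p then Suc (ks PF PW s p) else ks PF PW s p)"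
  by (simp add: ks_Suc da_step_def)

lemma ks_le_len: "ks PF PW s p \<le> length (PF p)"
proof (induction s)
  case 0 then show ?case by simp
next
  case (Suc s) then show ?case
    by (auto simp: ks_Suc_p rejected_def)
qed

lemma ks_mono_Suc: "ks PF PW s p \<le> ks PF PW (Suc s) p"
  by (simp add: ks_Suc_p)

lemma ks_Suc_le: "ks PF PW (Suc s) p \<le> Suc (ks PF PW s p)"
  by (simp add: ks_Suc_p)

lemma ks_mono: "s \<le> s' \<Longrightarrow> ks PF PW s p \<le> ks PF PW s' p"
  by (rule lift_Suc_mono_le[of "\<lambda>s. ks PF PW s p"]) (simp_all add: ks_mono_Suc)

lemma held_Some: "held PF PW k r = Some p \<Longrightarrow> proposes PF k p r \<and> p \<in> set (PW r)"
  unfolding held_def using find_in by fastforce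

lemma held_first: "held PF PW k r = Some x \<Longrightarrow> p \<in> set (PW r) \<Longrightarrow> proposes PF k p r
   \<Longrightarrow> idx (PW r) x \<le> idx (PW r) p"
  unfolding held_def using find_first_idx by fastforce

lemma held_ex: "p \<in> set (PW r) \<Longrightarrow> proposes PF k p r \<Longrightarrow> \<exists>x. held PF PW k r = Some x"
  unfolding held_def by (metis find_None_iff option.exhaust)

lemma held_not_rejected: "held PF PW k r = Some x \<Longrightarrow> \<not> rejected PF PW k x"
  using held_Some unfolding rejected_def proposes_def by fastforce

lemma held_step:
  assumes "held PF PW k r = Some x"
  shows "\<exists>y. held PF PW (da_step PF PW k) r = Some y \<and> idx (PW r) y \<le> idx (PW r) x"
proof -
  have nr: "\<not> rejected PF PW k x" using held_not_rejected assms .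
  have px: "proposes PF k x r" "x \<in> set (PW r)" using held_Some[OF assms] by auto
  have "da_step PF PW k x = k x" using nr by (simp add: da_step_def)
  then have px': "proposes PF (da_step PF PW k) x r" using px by (simp add: proposes_def)
  then obtain y where y: "held PF PW (da_step PF PW k) r = Some y" using held_ex[of x PW r PF "da_step PF PW k", OF px(2)] by blast
  moreover have "idx (PW r) y \<le> idx (PW r) x" using held_first[OF y px(2) px'] .
  ultimately show ?thesis by blast
qed

lemma held_ks_mono:
  assumes "s \<le> s'" "held PF PW (ks PF PW s) r = Some x"
  shows "\<exists>y. held PF PW (ks PF PW s') r = Some y \<and> idx (PW r) y \<le> idx (PW r) x"
  using assms
proof (induction s' rule: dec_induct)
  case base then show ?case by auto
next
  case (step n)
  then obtain y where y: "held PF PW (ks PF PW n) r = Some y" "idx (PW r) y \<le> idx (PW r) x" by blast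
  from held_step[OF y(1)] obtain z where "held PF PW (ks PF PW (Suc n)) r = Some z" "idx (PW r) z \<le> idx (PW r) y"
    by (auto simp: ks_Suc)
  then show ?case using y(2) by auto
qed

definition inv_rej :: "('f \<Rightarrow> 'w list) \<Rightarrow> ('w \<Rightarrow> 'f list) \<Rightarrow> ('f \<Rightarrow> nat) \<Rightarrow> bool" where
  "inv_rej PF PW k \<longleftrightarrow> (\<forall>p q. q < k p \<longrightarrow> p \<in> set (PW (PF p ! q)) \<longrightarrow>
     (\<exists>x. held PF PW k (PF p ! q) = Some x \<and> idx (PW (PF p ! q)) x < idx (PW (PF p ! q)) p))"

lemma inv_rej_step:
  assumes "inv_rej PF PW k"
  shows "inv_rej PF PW (da_step PF PW k)"
  unfolding inv_rej_def
proof (intro allI impI)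
  fix p q
  let ?k' = "da_step PF PW k"
  let ?r = "PF p ! q"
  assume q: "q < ?k' p" and pin: "p \<in> set (PW ?r)"
  have "\<exists>x. held PF PW k ?r = Some x \<and> idx (PW ?r) x < idx (PW ?r) p"
  proof (cases "q < k p")
    case True then show ?thesis using assms pin unfolding inv_rej_def by blast
  next
    case False
    then have rej: "rejected PF PW k p" and qe: "q = k p"
      using q by (auto simp: da_step_def split: if_splits)
    then have pr: "proposes PF k p ?r" and nh: "held PF PW k ?r \<noteq> Some p"
      by (auto simp: rejected_def proposes_def)
    obtain x where x: "held PF PW k ?r = Some x" using held_ex[of p PW ?r PF k] pin pr by blast
    have "idx (PW ?r) x \<le> idx (PW ?r) p" using held_first[OF x pin pr] .
    moreover have "x \<in> set (PW ?r)" using held_Some[OF x] by blast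
    moreover have "x \<noteq> p" using x nh by auto
    ultimately have "idx (PW ?r) x < idx (PW ?r) p" using idx_inj pin by fastforce
    then show ?thesis using x by blast
  qed
  then obtain x where x: "held PF PW k ?r = Some x" "idx (PW ?r) x < idx (PW ?r) p" by blast
  from held_step[OF x(1)] x(2) show "\<exists>x. held PF PW ?k' ?r = Some x \<and> idx (PW ?r) x < idx (PW ?r) p"
    by fastforce
qed

lemma inv_rej_ks: "inv_rej PF PW (ks PF PW s)"
proof (induction s)
  case 0 then show ?case by (simp add: inv_rej_def)
next
  case (Suc s) then show ?case by (simp add: ks_Suc inv_rej_step)
qed

lemma da_step_fixed: "(\<forall>p. \<not> rejected PF PW k p) \<Longrightarrow> da_step PF PW k = k"
  by (auto simp: da_step_def)

lemma final_fixed: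
  fixes PF :: "'f::finite \<Rightarrow> 'w list"
  shows "\<not> rejected PF PW (da_final PF PW) p"
proof -
  define M where "M s = (\<Sum>p\<in>UNIV. ks PF PW s p)" for s
  define N where "N = (\<Sum>i\<in>UNIV. length (PF i))"
  have claim: "(\<forall>p. \<not> rejected PF PW (ks PF PW s) p) \<or> s \<le> M s" for s
  proof (induction s)
    case 0 then show ?case by simp
  next
    case (Suc s)
    show ?case
    proof (cases "\<forall>p. \<not> rejected PF PW (ks PF PW s) p")
      case True
      then have "ks PF PW (Suc s) = ks PF PW s" by (simp add: ks_Suc da_step_fixed)
      then show ?thesis using True by simp
    next
      case False
      then have le: "s \<le> M s" using Suc by blast
      from False obtain p where p: "rejected PF PW (ks PF PW s) p" by blast
      have "M s < M (Suc s)" unfolding M_def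
        by (rule sum_strict_mono_ex1) (use p in \<open>auto simp: ks_mono_Suc ks_Suc_p\<close>)
      then show ?thesis using le by simp
    qed
  qed
  have MN: "M N \<le> N" unfolding M_def N_def by (rule sum_mono) (simp add: ks_le_len)
  have all: "ks PF PW N p' = length (PF p')" if "\<not> (\<forall>p. \<not> rejected PF PW (ks PF PW N) p)" for p'
  proof (rule ccontr)
    assume ne: "ks PF PW N p' \<noteq> length (PF p')"
    have lt: "ks PF PW N p' < length (PF p')" using ne ks_le_len[of PF PW N p'] by simp
    have "M N < N" unfolding M_def N_def
      by (rule sum_strict_mono_ex1) (use lt[unfolded N_def] in \<open>auto simp: ks_le_len\<close>)
    moreover have "N \<le> M N" using claim[of N] that by blast
    ultimately show False by simp
  qed
  show ?thesis
  proof (cases "\<forall>p. \<not> rejected PF PW (ks PF PW N) p")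
    case True then show ?thesis by (simp add: da_final_ks N_def)
  next
    case False
    then have "ks PF PW N p = length (PF p)" using all by blast
    then show ?thesis by (simp add: da_final_ks N_def rejected_def)
  qed
qed

lemma final_le: "da_final PF PW p \<le> length (PF p)"
  by (simp add: da_final_ks ks_le_len)

lemma DA_Some:
  "DA PF PW r = Some p \<Longrightarrow> da_final PF PW p < length (PF p) \<and> PF p ! da_final PF PW p = r \<and> p \<in> set (PW r)"
  unfolding DA_def using held_Some proposes_def by fastforce

lemma DA_held:
  fixes PF :: "'f::finite \<Rightarrow> 'w list"
  shows "da_final PF PW p < length (PF p) \<Longrightarrow> DA PF PW (PF p ! da_final PF PW p) = Some p"
  using final_fixed[of PF PW p] unfolding DA_def rejected_def by auto

lemma DA_rej:
  "q < da_final PF PW p \<Longrightarrow> p \<in> set (PW (PF p ! q)) \<Longrightarrow>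
    \<exists>x. DA PF PW (PF p ! q) = Some x \<and> idx (PW (PF p ! q)) x < idx (PW (PF p ! q)) p"
  using inv_rej_ks[of PF PW] unfolding DA_def inv_rej_def da_final_ks by blast

lemma DA_inj: "DA PF PW r = Some p \<Longrightarrow> DA PF PW r' = Some p \<Longrightarrow> r = r'"
  using DA_Some by metis


definition gstab :: "('a \<Rightarrow> 'b list) \<Rightarrow> ('b \<Rightarrow> 'a list) \<Rightarrow> ('b \<Rightarrow> 'a option) \<Rightarrow> bool" where
  "gstab PF PW m \<longleftrightarrow> (\<forall>r r' p. m r = Some p \<longrightarrow> m r' = Some p \<longrightarrow> r = r')
    \<and> (\<forall>r p. m r = Some p \<longrightarrow> r \<in> set (PF p) \<and> p \<in> set (PW r))
    \<and> (\<forall>p r. r \<in> set (PF p) \<longrightarrow> p \<in> set (PW r) \<longrightarrow>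
          (\<forall>r'. m r' = Some p \<longrightarrow> idx (PF p) r < idx (PF p) r') \<longrightarrow>
          (\<exists>x. m r = Some x \<and> idx (PW r) x < idx (PW r) p))"

lemma opt_inv:
  assumes dist: "\<forall>p. distinct (PF p)" and gs: "gstab PF PW m"
  shows "q < ks PF PW s p \<Longrightarrow> m (PF p ! q) \<noteq> Some p"
proof (induction s arbitrary: p q)
  case 0 then show ?case by simp
next
  case (Suc s)
  let ?k = "ks PF PW s"
  show ?case
  proof (cases "q < ?k p")
    case True then show ?thesis using Suc.IH by blast
  next
    case False
    then have rej: "rejected PF PW ?k p" and qe: "q = ?k p"
      using Suc.prems by (auto simp: ks_Suc_p split: if_splits)
    let ?r = "PF p ! q"
    have pr: "proposes PF ?k p ?r" and nh: "held PF PW ?k ?r \<noteq> Some p"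
      using rej qe by (auto simp: rejected_def proposes_def)
    show ?thesis
    proof
      assume mr: "m ?r = Some p"
      then have pin: "p \<in> set (PW ?r)" using gs unfolding gstab_def by blast
      obtain x where x: "held PF PW ?k ?r = Some x" using held_ex[of p PW ?r PF ?k] pin pr by blast
      have xin: "x \<in> set (PW ?r)" and xpr: "proposes PF ?k x ?r" using held_Some[OF x] by auto
      have "idx (PW ?r) x \<le> idx (PW ?r) p" using held_first[OF x pin pr] .
      moreover have "x \<noteq> p" using x nh by auto
      ultimately have xlt: "idx (PW ?r) x < idx (PW ?r) p" using idx_inj pin xin by fastforce
      have kx: "?k x < length (PF x)" "PF x ! ?k x = ?r" using xpr by (auto simp: proposes_def)
      have rin: "?r \<in> set (PF x)" using kx by (metis nth_mem)
      have ir: "idx (PF x) ?r = ?k x" using kx idx_nth dist by metis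
      have better: "\<forall>r'. m r' = Some x \<longrightarrow> idx (PF x) ?r < idx (PF x) r'"
      proof (intro allI impI)
        fix r' assume mr': "m r' = Some x"
        then have r'in: "r' \<in> set (PF x)" using gs unfolding gstab_def by blast
        define q' where "q' = idx (PF x) r'"
        have r'q: "PF x ! q' = r'" using r'in nth_idx q'_def by metis
        have "\<not> q' < ?k x" using Suc.IH[of q' x] r'q mr' by blast
        moreover have "q' \<noteq> ?k x" using r'q kx mr mr' \<open>x \<noteq> p\<close> by auto
        ultimately show "idx (PF x) ?r < idx (PF x) r'" using ir q'_def by simp
      qed
      from gs[unfolded gstab_def] rin xin better obtain x' where
        "m ?r = Some x'" "idx (PW ?r) x' < idx (PW ?r) x" by blast
      then show False using mr xlt by auto
    qed
  qed
qed

lemma DA_opt: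
  assumes "\<forall>p. distinct (PF p)" "gstab PF PW m" "m r = Some p"
  shows "da_final PF PW p \<le> idx (PF p) r"
proof (rule ccontr)
  assume "\<not> ?thesis"
  then have "idx (PF p) r < ks PF PW (\<Sum>i\<in>UNIV. length (PF i)) p" by (simp add: da_final_ks)
  from opt_inv[OF assms(1,2) this] have "m (PF p ! idx (PF p) r) \<noteq> Some p" .
  moreover have "r \<in> set (PF p)" using assms(2,3) unfolding gstab_def by blast
  ultimately show False using assms(3) nth_idx by metis
qed


section \<open>Truthful lists\<close>

lemma sorted_key_exists:
  fixes K :: "'a::finite \<Rightarrow> real"
  assumes "inj K"
  shows "\<exists>L. distinct L \<and> set L = UNIV \<and> sorted_wrt (\<lambda>a b. K a > K b) L"
proof -
  obtain xs :: "'a list" where xs: "set xs = UNIV" "distinct xs"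
    using finite_distinct_list[of "UNIV :: 'a set"] by auto
  define L where "L = sort_key (\<lambda>a. - K a) xs"
  have d: "distinct L" using xs by (simp add: L_def)
  have st: "set L = UNIV" using xs by (simp add: L_def)
  have so: "sorted (map (\<lambda>a. - K a) L)" by (simp add: L_def)
  have "sorted_wrt (\<lambda>a b. K a > K b) L"
    unfolding sorted_wrt_iff_nth_less
  proof (intro allI impI)
    fix i j assume ij: "i < j" "j < length L"
    have "- K (L ! i) \<le> - K (L ! j)" using so ij by (simp add: sorted_iff_nth_mono)
    moreover have "L ! i \<noteq> L ! j" using d ij by (simp add: nth_eq_iff_index_eq)
    then have "K (L ! i) \<noteq> K (L ! j)" using assms by (meson injD)
    ultimately show "K (L ! i) > K (L ! j)" by simp
  qed
  then show ?thesis using d st by blast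
qed

lemma ft_props:
  assumes "inj (U i)"
  shows "distinct (firm_truth U i) \<and> set (firm_truth U i) = UNIV \<and> sorted_wrt (\<lambda>a b. U i a > U i b) (firm_truth U i)"
  unfolding firm_truth_def by (rule someI_ex) (rule sorted_key_exists[OF assms])

lemma sorted_idx1:
  assumes "sorted_wrt (\<lambda>a b. K a > (K b :: real)) L" "i < j" "j < length L"
  shows "K (L ! j) < K (L ! i)"
proof -
  have "(\<lambda>a b. K a > K b) (L ! i) (L ! j)" by (rule sorted_wrt_nth_less[OF assms])
  then show ?thesis by simp
qed

lemma sorted_idx:
  assumes "distinct L" "a \<in> set L" "b \<in> set L" "sorted_wrt (\<lambda>a b. K a > (K b :: real)) L"
  shows "idx L a < idx L b \<longleftrightarrow> K b < K a"
proof -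
  have la: "idx L a < length L" "L ! idx L a = a" using idx_less[OF assms(2)] nth_idx[OF assms(2)] by auto
  have lb: "idx L b < length L" "L ! idx L b = b" using idx_less[OF assms(3)] nth_idx[OF assms(3)] by auto
  have 1: "K b < K a" if "idx L a < idx L b"
  proof -
    have "K (L ! idx L b) < K (L ! idx L a)" by (rule sorted_idx1[OF assms(4) that lb(1)])
    then show ?thesis using la(2) lb(2) by simp
  qed
  have 2: "K a < K b" if "idx L b < idx L a"
  proof -
    have "K (L ! idx L a) < K (L ! idx L b)" by (rule sorted_idx1[OF assms(4) that la(1)])
    then show ?thesis using la(2) lb(2) by simp
  qed
  have 3: "a = b" if "idx L a = idx L b" using la(2) lb(2) that by metis
  show ?thesis
  proof
    assume "idx L a < idx L b" then show "K b < K a" using 1 by blast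
  next
    assume k: "K b < K a"
    show "idx L a < idx L b"
    proof (cases "idx L a < idx L b")
      case True then show ?thesis .
    next
      case False
      then consider "idx L b < idx L a" | "idx L a = idx L b" by linarith
      then show ?thesis
      proof cases
        case 1 then have "K a < K b" using 2 by blast
        then show ?thesis using k by simp
      next
        case 2 then have "a = b" using 3 by blast
        then show ?thesis using k by simp
      qed
    qed
  qed
qed

lemma ft_idx:
  assumes "\<forall>i. inj (U i)"
  shows "idx (firm_truth U i) a < idx (firm_truth U i) b \<longleftrightarrow> U i b < U i a"
proof -
  have ii: "inj (U i)" using assms by blast
  have p: "distinct (firm_truth U i)" "set (firm_truth U i) = UNIV" "sorted_wrt (\<lambda>a b. U i a > U i b) (firm_truth U i)"
    using ft_props[of U i, OF ii] by auto
  show ?thesis using sorted_idx[OF p(1) _ _ p(3), of a b] p(2) by simp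
qed

lemma ft_set: "\<forall>i. inj (U i) \<Longrightarrow> x \<in> set (firm_truth U i)"
  using ft_props[of U i] by simp

lemma ft_distinct: "\<forall>i. inj (U i) \<Longrightarrow> distinct (firm_truth U i)"
  using ft_props[of U i] by simp

lemma futil_Some:
  assumes "is_matching \<mu>" "\<mu> j = Some i"
  shows "futil U \<mu> i = U i j"
proof -
  have "(THE j. \<mu> j = Some i) = j"
    by (rule the_equality) (use assms in \<open>auto simp: is_matching_def\<close>)
  then show ?thesis using assms(2) unfolding futil_def by auto
qed

lemma futil_None: "(\<forall>j. \<mu> j \<noteq> Some i) \<Longrightarrow> futil U \<mu> i = 0"
  unfolding futil_def by auto

lemma futil_cases:
  "is_matching \<mu> \<Longrightarrow> (\<exists>w. \<mu> w = Some i \<and> futil U \<mu> i = U i w) \<or> ((\<forall>w. \<mu> w \<noteq> Some i) \<and> futil U \<mu> i = 0)"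
  using futil_Some futil_None by metis

definition rstab :: "('f \<Rightarrow> 'w \<Rightarrow> real) \<Rightarrow> ('w \<Rightarrow> 'f list) \<Rightarrow> ('w \<Rightarrow> 'f option) \<Rightarrow> bool" where
  "rstab U PW \<mu> \<longleftrightarrow> is_matching \<mu> \<and> (\<forall>j i. \<mu> j = Some i \<longrightarrow> i \<in> set (PW j))
     \<and> (\<forall>i j. futil U \<mu> i < U i j \<longrightarrow> i \<in> set (PW j) \<longrightarrow> (\<exists>i'. \<mu> j = Some i' \<and> idx (PW j) i' < idx (PW j) i))"

lemma rstab_mat: "rstab U PW \<mu> \<Longrightarrow> is_matching \<mu>"
  by (simp add: rstab_def)

lemma rstab_ir: "rstab U PW \<mu> \<Longrightarrow> \<mu> j = Some i \<Longrightarrow> i \<in> set (PW j)"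
  by (simp add: rstab_def)

lemma rstab_bl: "rstab U PW \<mu> \<Longrightarrow> futil U \<mu> i < U i j \<Longrightarrow> i \<in> set (PW j)
   \<Longrightarrow> \<exists>i'. \<mu> j = Some i' \<and> idx (PW j) i' < idx (PW j) i"
  by (simp add: rstab_def)

lemma DA_matching: "is_matching (DA PF PW)"
  unfolding is_matching_def by (blast intro: DA_inj)

lemma rstab_DA:
  fixes U :: "'f::finite \<Rightarrow> 'w::finite \<Rightarrow> real"
  assumes inj: "\<forall>i. inj (U i)" and pos: "\<forall>i j. U i j > 0"
  shows "rstab U PW (DA (firm_truth U) PW)"
proof -
  let ?PF = "firm_truth U"
  let ?k = "da_final ?PF PW"
  let ?m = "DA ?PF PW"
  have mat: "is_matching ?m" by (rule DA_matching)
  have ir: "\<forall>j i. ?m j = Some i \<longrightarrow> i \<in> set (PW j)" by (blast dest: DA_Some)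
  have bl: "\<exists>i'. ?m j = Some i' \<and> idx (PW j) i' < idx (PW j) i"
    if fu: "futil U ?m i < U i j" and iin: "i \<in> set (PW j)" for i j
  proof -
    have ii: "inj (U i)" using inj by blast
    have jin: "j \<in> set (?PF i)" using ft_set[OF inj] .
    have lt: "idx (?PF i) j < ?k i"
    proof (cases "\<exists>j'. ?m j' = Some i")
      case True
      then obtain j' where j': "?m j' = Some i" by blast
      from DA_Some[OF j'] have kk: "?k i < length (?PF i)" "?PF i ! ?k i = j'" by auto
      have "futil U ?m i = U i j'" using futil_Some[OF mat j'] .
      then have "U i j' < U i j" using fu by simp
      then have "idx (?PF i) j < idx (?PF i) j'" using ft_idx[OF inj, of i j j'] by simp
      moreover have "idx (?PF i) j' = ?k i"
        using idx_nth[OF ft_distinct[OF inj] kk(1)] kk(2) by simp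
      ultimately show ?thesis by simp
    next
      case False
      then have "\<not> ?k i < length (?PF i)" using DA_held[of ?PF PW i] by blast
      then show ?thesis using idx_less[OF jin] by simp
    qed
    have e: "?PF i ! idx (?PF i) j = j" using nth_idx[OF jin] .
    have iin': "i \<in> set (PW (?PF i ! idx (?PF i) j))" using iin e by simp
    show ?thesis using DA_rej[OF lt iin'] e by simp
  qed
  show ?thesis unfolding rstab_def using mat ir bl by blast
qed

lemma rstab_gstab:
  fixes U :: "'f \<Rightarrow> 'w::finite \<Rightarrow> real"
  assumes inj: "\<forall>i. inj (U i)" and pos: "\<forall>i j. U i j > 0" and rs: "rstab U PW \<mu>"
  shows "gstab (firm_truth U) PW \<mu>"
proof -
  have mat: "is_matching \<mu>" using rstab_mat[OF rs] .
  have a: "\<forall>r r' p. \<mu> r = Some p \<longrightarrow> \<mu> r' = Some p \<longrightarrow> r = r'" using mat unfolding is_matching_def by blast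
  have ir: "\<forall>j i. \<mu> j = Some i \<longrightarrow> i \<in> set (PW j)" using rstab_ir[OF rs] by blast
  have b: "\<forall>r p. \<mu> r = Some p \<longrightarrow> r \<in> set (firm_truth U p) \<and> p \<in> set (PW r)"
    using ir ft_set[OF inj] by blast
  have bl: "\<forall>i j. futil U \<mu> i < U i j \<longrightarrow> i \<in> set (PW j) \<longrightarrow> (\<exists>i'. \<mu> j = Some i' \<and> idx (PW j) i' < idx (PW j) i)"
    using rstab_bl[OF rs] by blast
  have c: "\<exists>x. \<mu> r = Some x \<and> idx (PW r) x < idx (PW r) p"
    if "r \<in> set (firm_truth U p)" "p \<in> set (PW r)"
       "\<forall>r'. \<mu> r' = Some p \<longrightarrow> idx (firm_truth U p) r < idx (firm_truth U p) r'" for p r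
  proof -
    have ii: "inj (U p)" using inj by blast
    have "futil U \<mu> p < U p r"
    proof (cases "\<exists>r'. \<mu> r' = Some p")
      case True
      then obtain r' where r': "\<mu> r' = Some p" by blast
      then have "idx (firm_truth U p) r < idx (firm_truth U p) r'" using that by blast
      then have "U p r' < U p r" using ft_idx[OF inj] by simp
      then show ?thesis using futil_Some[OF mat r', of U] by linarith
    next
      case False
      then have "futil U \<mu> p = 0" using futil_None[of \<mu> p U] by blast
      then show ?thesis using pos by simp
    qed
    then show ?thesis using bl that(2) by blast
  qed
  show ?thesis unfolding gstab_def using a b c by (intro conjI allI impI) blast+
qed

lemma futil_nonneg: "\<forall>i j. U i j > 0 \<Longrightarrow> 0 \<le> futil U \<mu> i"
  unfolding futil_def by (simp add: less_imp_le)

lemma DA_fopt: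
  fixes U :: "'f::finite \<Rightarrow> 'w::finite \<Rightarrow> real"
  assumes inj: "\<forall>i. inj (U i)" and pos: "\<forall>i j. U i j > 0" and rs: "rstab U PW \<mu>"
  shows "futil U \<mu> i \<le> futil U (DA (firm_truth U) PW) i"
proof -
  let ?PF = "firm_truth U"
  let ?k = "da_final ?PF PW"
  let ?m = "DA ?PF PW"
  have ii: "inj (U i)" using inj by blast
  have mat: "is_matching \<mu>" using rstab_mat[OF rs] .
  have matm: "is_matching ?m" by (rule DA_matching)
  show ?thesis
  proof (cases "\<exists>j. \<mu> j = Some i")
    case False
    then have "futil U \<mu> i = 0" using futil_None[of \<mu> i U] by blast
    then show ?thesis using futil_nonneg[OF pos] by simp
  next
    case True
    then obtain j where j: "\<mu> j = Some i" by blast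
    have gs: "gstab ?PF PW \<mu>" using rstab_gstab[OF inj pos rs] .
    have dist: "\<forall>p. distinct (?PF p)" using ft_distinct[OF inj] by blast
    have le: "?k i \<le> idx (?PF i) j" using DA_opt[OF dist gs j] .
    have jin: "j \<in> set (?PF i)" using ft_set[OF inj] .
    have lt: "?k i < length (?PF i)" using le idx_less[OF jin] by simp
    have h: "?m (?PF i ! ?k i) = Some i" using DA_held[OF lt] .
    have e1: "futil U ?m i = U i (?PF i ! ?k i)" using futil_Some[OF matm h] .
    have e2: "futil U \<mu> i = U i j" using futil_Some[OF mat j] .
    have ik: "idx (?PF i) (?PF i ! ?k i) = ?k i" using idx_nth[OF ft_distinct[OF inj] lt] .
    show ?thesis
    proof (cases "?k i = idx (?PF i) j")
      case True
      then have "?PF i ! ?k i = j" using nth_idx[OF jin] by simp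
      then show ?thesis using e1 e2 by simp
    next
      case False
      then have "idx (?PF i) (?PF i ! ?k i) < idx (?PF i) j" using le ik by simp
      then have "U i j < U i (?PF i ! ?k i)" using ft_idx[OF inj] by simp
      then show ?thesis using e1 e2 by simp
    qed
  qed
qed



definition wl :: "('f \<Rightarrow> 'w \<Rightarrow> real) \<Rightarrow> 'w \<Rightarrow> 'f::finite list" where
  "wl uw = firm_truth (\<lambda>j i. uw i j)"

lemma wl_idx:
  assumes "\<forall>j. inj (\<lambda>i. uw i j)"
  shows "idx (wl uw j) a < idx (wl uw j) b \<longleftrightarrow> uw b j < uw a j"
proof -
  have "\<forall>j. inj ((\<lambda>j i. uw i j) j)" using assms by simp
  from ft_idx[OF this, of j a b] show ?thesis by (simp add: wl_def)
qed

lemma wl_set: "\<forall>j. inj (\<lambda>i. uw i j) \<Longrightarrow> x \<in> set (wl uw j)"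
proof -
  assume a: "\<forall>j. inj (\<lambda>i. uw i j)"
  have "\<forall>j. inj ((\<lambda>j i. uw i j) j)" using a by simp
  from ft_set[OF this, of x j] show ?thesis by (simp add: wl_def)
qed

lemma wl_distinct: "\<forall>j. inj (\<lambda>i. uw i j) \<Longrightarrow> distinct (wl uw j)"
proof -
  assume a: "\<forall>j. inj (\<lambda>i. uw i j)"
  have "\<forall>j. inj ((\<lambda>j i. uw i j) j)" using a by simp
  from ft_distinct[OF this, of j] show ?thesis by (simp add: wl_def)
qed

lemma wutil_Some: "\<mu> w = Some i \<Longrightarrow> wutil uw \<mu> w = uw i w"
  by (simp add: wutil_def)

lemma wutil_None: "\<mu> w = None \<Longrightarrow> wutil uw \<mu> w = 0"
  by (simp add: wutil_def)

lemma wutil_nonneg: "\<forall>i j. uw i j > 0 \<Longrightarrow> 0 \<le> wutil uw \<mu> w"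
  by (cases "\<mu> w") (auto simp: wutil_def less_imp_le)

lemma rstab_block:
  assumes rs: "rstab U PW \<mu>" and pw: "PW w = wl uw w" and injW: "\<forall>j. inj (\<lambda>i. uw i j)"
    and f: "futil U \<mu> i < U i w" and w: "wutil uw \<mu> w < uw i w"
  shows False
proof -
  have "i \<in> set (PW w)" using pw wl_set[OF injW] by simp
  from rstab_bl[OF rs f this] obtain i' where i': "\<mu> w = Some i'" "idx (PW w) i' < idx (PW w) i" by blast
  then have "uw i w < uw i' w" using pw wl_idx[OF injW, of w i' i] by simp
  moreover have "wutil uw \<mu> w = uw i' w" using wutil_Some[of \<mu> w i' uw, OF i'(1)] .
  ultimately show False using w by simp
qed

lemma stable_of_rstab:
  assumes rs: "rstab U PW \<mu>" and pw: "\<forall>w. PW w = wl uw w" and injW: "\<forall>j. inj (\<lambda>i. uw i j)"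
    and posU: "\<forall>i j. U i j > 0" and posW: "\<forall>i j. uw i j > 0"
  shows "stable U uw \<mu>"
  unfolding stable_def
proof (intro conjI)
  show "is_matching \<mu>" using rstab_mat[OF rs] .
  show "\<forall>j i. \<mu> j = Some i \<longrightarrow> 0 < uw i j \<and> 0 < U i j" using posU posW by blast
  show "\<not> (\<exists>i j. futil U \<mu> i < U i j \<and> wutil uw \<mu> j < uw i j)"
    using rstab_block[OF rs _ injW] pw by blast
qed



lemma manip:
  fixes U :: "'f::finite \<Rightarrow> 'w::finite \<Rightarrow> real" and uw :: "'f \<Rightarrow> 'w \<Rightarrow> real"
  assumes injU: "\<forall>i. inj (U i)" and posU: "\<forall>i j. U i j > 0"
    and injW: "\<forall>j. inj (\<lambda>i. uw i j)" and posW: "\<forall>i j. uw i j > 0"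
    and uniq: "\<exists>!\<mu>. stable U uw \<mu>" and dL: "distinct L"
  shows "wutil uw (DA (firm_truth U) ((wl uw)(j := L))) j \<le> wutil uw (DA (firm_truth U) (wl uw)) j"
proof (rule ccontr)
  let ?PF = "firm_truth U"
  let ?\<sigma> = "wl uw"
  define \<mu> where "\<mu> = DA ?PF ?\<sigma>"
  define \<nu> where "\<nu> = DA ?PF (?\<sigma>(j := L))"
  assume "\<not> wutil uw \<nu> j \<le> wutil uw \<mu> j"
  then have jgain: "wutil uw \<mu> j < wutil uw \<nu> j" by simp
  have rs\<mu>: "rstab U ?\<sigma> \<mu>" unfolding \<mu>_def by (rule rstab_DA[OF injU posU])
  have st\<mu>: "stable U uw \<mu>" by (rule stable_of_rstab[OF rs\<mu> _ injW posU posW]) simp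
  have rs\<nu>: "rstab U (?\<sigma>(j := L)) \<nu>" unfolding \<nu>_def by (rule rstab_DA[OF injU posU])
  have mat\<mu>: "is_matching \<mu>" using rstab_mat[OF rs\<mu>] .
  have mat\<nu>: "is_matching \<nu>" using rstab_mat[OF rs\<nu>] .
  have block\<mu>: "\<not> (futil U \<mu> i < U i w \<and> wutil uw \<mu> w < uw i w)" for i w
    using st\<mu> unfolding stable_def by blast
  have block\<nu>: "\<not> (futil U \<nu> i < U i w \<and> wutil uw \<nu> w < uw i w)" if "w \<noteq> j" for i w
  proof
    assume a: "futil U \<nu> i < U i w \<and> wutil uw \<nu> w < uw i w"
    have "(?\<sigma>(j := L)) w = wl uw w" using that by simp
    from rstab_block[OF rs\<nu> this injW] a show False by blast
  qed
  define Wp where "Wp = {w. wutil uw \<mu> w < wutil uw \<nu> w}"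
  have jW: "j \<in> Wp" using jgain by (simp add: Wp_def)
  have finW: "finite Wp" by simp
  have F1: "\<exists>f. \<nu> w = Some f \<and> wutil uw \<nu> w = uw f w" if "w \<in> Wp" for w
  proof (cases "\<nu> w")
    case None
    then have "wutil uw \<nu> w = 0" by (simp add: wutil_def)
    moreover have "0 \<le> wutil uw \<mu> w" using wutil_nonneg[OF posW] .
    ultimately show ?thesis using that by (simp add: Wp_def)
  next
    case (Some f) then show ?thesis by (simp add: wutil_def)
  qed
  have F2: "\<exists>w'\<in>Wp. \<mu> w' = \<nu> w" if wW: "w \<in> Wp" for w
  proof -
    obtain f where f: "\<nu> w = Some f" "wutil uw \<nu> w = uw f w" using F1[OF wW] by blast
    have lt: "wutil uw \<mu> w < uw f w" using wW f by (simp add: Wp_def)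
    have "\<exists>w'. \<mu> w' = Some f"
    proof (rule ccontr)
      assume "\<not> ?thesis"
      then have "futil U \<mu> f = 0" using futil_None[of \<mu> f U] by blast
      then show False using block\<mu>[of f w] lt posU by force
    qed
    then obtain w' where w': "\<mu> w' = Some f" by blast
    have fu: "futil U \<mu> f = U f w'" using futil_Some[OF mat\<mu> w', of U] .
    have ww': "w' \<noteq> w"
    proof
      assume "w' = w"
      then have "wutil uw \<mu> w = uw f w" using wutil_Some[of \<mu> w f uw] w' by simp
      then show False using lt by simp
    qed
    have Ugt: "U f w < U f w'"
    proof (rule ccontr)
      assume "\<not> ?thesis"
      moreover have "U f w \<noteq> U f w'" using ww' injU by (metis injD)
      ultimately have "U f w' < U f w" by simp
      then show False using block\<mu>[of f w] fu lt by simp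
    qed
    have "w' \<in> Wp"
    proof (cases "w' = j")
      case True then show ?thesis using jW by simp
    next
      case False
      show ?thesis
      proof (rule ccontr)
        assume nW: "w' \<notin> Wp"
        then have le: "wutil uw \<nu> w' \<le> uw f w'"
          using wutil_Some[of \<mu> w' f uw] w' by (simp add: Wp_def)
        have ne: "\<nu> w' \<noteq> Some f" using f(1) ww' mat\<nu> unfolding is_matching_def by blast
        have "wutil uw \<nu> w' < uw f w'"
        proof (cases "\<nu> w'")
          case None then show ?thesis using posW by (simp add: wutil_def)
        next
          case (Some f'')
          then have "f'' \<noteq> f" using ne by simp
          then have "uw f'' w' \<noteq> uw f w'" using injW by (metis injD)
          moreover have "wutil uw \<nu> w' = uw f'' w'" using Some by (simp add: wutil_def)
          ultimately show ?thesis using le by simp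
        qed
        moreover have "futil U \<nu> f < U f w'" using futil_Some[OF mat\<nu> f(1), of U] Ugt by simp
        ultimately show False using block\<nu>[OF False, of f] by simp
      qed
    qed
    then show ?thesis using w' f(1) by auto
  qed
  have inj\<nu>: "inj_on \<nu> Wp"
  proof (rule inj_onI)
    fix a b assume ab: "a \<in> Wp" "b \<in> Wp" "\<nu> a = \<nu> b"
    obtain f where "\<nu> a = Some f" using F1[OF ab(1)] by blast
    then show "a = b" using ab(3) mat\<nu> unfolding is_matching_def by metis
  qed
  have sub: "\<nu> ` Wp \<subseteq> \<mu> ` Wp"
  proof
    fix x assume "x \<in> \<nu> ` Wp"
    then obtain w where w: "w \<in> Wp" "x = \<nu> w" by blast
    obtain w' where w': "w' \<in> Wp" "\<mu> w' = \<nu> w" using F2[OF w(1)] by blast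
    then have "x = \<mu> w'" using w(2) by simp
    then show "x \<in> \<mu> ` Wp" using w'(1) by blast
  qed
  have c1: "card (\<nu> ` Wp) = card Wp" using card_image[OF inj\<nu>] .
  have c2: "card (\<mu> ` Wp) \<le> card Wp" using card_image_le[OF finW] .
  have c3: "card (\<nu> ` Wp) \<le> card (\<mu> ` Wp)" using card_mono[OF finite_imageI[OF finW] sub] .
  have F3: "\<nu> ` Wp = \<mu> ` Wp"
    by (rule card_subset_eq[OF finite_imageI[OF finW] sub]) (use c1 c2 c3 in linarith)
  have F4: "\<exists>w''\<in>Wp. \<nu> w'' = \<mu> w \<and> (\<exists>f. \<mu> w = Some f)" if "w \<in> Wp" for w
  proof -
    have "\<mu> w \<in> \<nu> ` Wp" using F3 that by simp
    then obtain w'' where w0: "\<mu> w = \<nu> w''" "w'' \<in> Wp" by (rule imageE)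
    then have w'': "w'' \<in> Wp" "\<nu> w'' = \<mu> w" by auto
    then show ?thesis using F1[OF w''(1)] by auto
  qed
  \<comment> \<open>worker-proposing run\<close>
  have injU': "\<forall>j. inj (\<lambda>i. uw i j)" using injW .
  have dist\<sigma>: "distinct (?\<sigma> w)" for w using wl_distinct[OF injW] .
  have set\<sigma>: "x \<in> set (?\<sigma> w)" for x w using wl_set[OF injW] .
  have setPF: "x \<in> set (?PF i)" for x i using ft_set[OF injU] .
  have distPF: "distinct (?PF i)" for i using ft_distinct[OF injU] .
  define kW where "kW = da_final ?\<sigma> ?PF"
  define mW where "mW = DA ?\<sigma> ?PF"
  define \<mu>W where "\<mu>W w = (if kW w < length (?\<sigma> w) then Some (?\<sigma> w ! kW w) else None)" for w
  have kWle: "kW w \<le> length (?\<sigma> w)" for w unfolding kW_def by (rule final_le)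
  have mWh: "mW (?\<sigma> w ! kW w) = Some w" if "kW w < length (?\<sigma> w)" for w
    using DA_held[of ?\<sigma> ?PF w] that unfolding kW_def mW_def by blast
  have mWS: "kW x < length (?\<sigma> x) \<and> ?\<sigma> x ! kW x = i" if "mW i = Some x" for i x
    using DA_Some[of ?\<sigma> ?PF i x] that unfolding kW_def mW_def by blast
  have mat\<mu>W: "is_matching \<mu>W"
    unfolding is_matching_def
  proof (intro allI impI)
    fix a b i assume ab: "\<mu>W a = Some i \<and> \<mu>W b = Some i"
    then have "kW a < length (?\<sigma> a)" "?\<sigma> a ! kW a = i" "kW b < length (?\<sigma> b)" "?\<sigma> b ! kW b = i"
      by (auto simp: \<mu>W_def split: if_splits)
    then have "mW i = Some a" "mW i = Some b" using mWh by metis+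
    then show "a = b" by simp
  qed
  have pref1: "idx (?\<sigma> w) f < kW w" if "wutil uw \<mu>W w < uw f w" for w f
  proof (cases "kW w < length (?\<sigma> w)")
    case True
    let ?c = "?\<sigma> w ! kW w"
    have "\<mu>W w = Some ?c" using True by (simp add: \<mu>W_def)
    then have "uw ?c w < uw f w" using that wutil_Some[of \<mu>W w ?c uw] by simp
    then have "idx (?\<sigma> w) f < idx (?\<sigma> w) ?c" using wl_idx[OF injW, of w f ?c] by simp
    then show ?thesis using idx_nth[OF dist\<sigma> True] by simp
  next
    case False
    then show ?thesis using kWle[of w] idx_less[OF set\<sigma>[of f w]] by simp
  qed
  have pref2: "wutil uw \<mu>W w < uw f w" if "idx (?\<sigma> w) f < kW w" for w f
  proof (cases "kW w < length (?\<sigma> w)")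
    case True
    let ?c = "?\<sigma> w ! kW w"
    have "\<mu>W w = Some ?c" using True by (simp add: \<mu>W_def)
    then have e: "wutil uw \<mu>W w = uw ?c w" using wutil_Some[of \<mu>W w ?c uw] by simp
    have "idx (?\<sigma> w) f < idx (?\<sigma> w) ?c" using idx_nth[OF dist\<sigma> True] that by simp
    then have "uw ?c w < uw f w" using wl_idx[OF injW, of w f ?c] by simp
    then show ?thesis using e by simp
  next
    case False
    then have "\<mu>W w = None" by (simp add: \<mu>W_def)
    then show ?thesis using posW by (simp add: wutil_def)
  qed
  have st\<mu>W: "stable U uw \<mu>W"
    unfolding stable_def
  proof (intro conjI)
    show "is_matching \<mu>W" by (rule mat\<mu>W)
    show "\<forall>j i. \<mu>W j = Some i \<longrightarrow> 0 < uw i j \<and> 0 < U i j" using posU posW by blast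
    show "\<not> (\<exists>i w. futil U \<mu>W i < U i w \<and> wutil uw \<mu>W w < uw i w)"
    proof
      assume "\<exists>i w. futil U \<mu>W i < U i w \<and> wutil uw \<mu>W w < uw i w"
      then obtain i w where b: "futil U \<mu>W i < U i w" "wutil uw \<mu>W w < uw i w" by blast
      have q: "idx (?\<sigma> w) i < kW w" using pref1[OF b(2)] .
      have e: "?\<sigma> w ! idx (?\<sigma> w) i = i" using nth_idx[OF set\<sigma>] .
      have win: "w \<in> set (?PF (?\<sigma> w ! idx (?\<sigma> w) i))" using setPF .
      from DA_rej[of "idx (?\<sigma> w) i" ?\<sigma> ?PF w, OF q[unfolded kW_def] win]
      obtain x where x: "mW i = Some x" "idx (?PF i) x < idx (?PF i) w"
        unfolding mW_def e by blast
      have "\<mu>W x = Some i" using mWS[OF x(1)] by (simp add: \<mu>W_def)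
      then have "futil U \<mu>W i = U i x" using futil_Some[OF mat\<mu>W, of x i U] by simp
      moreover have "U i w < U i x" using x(2) ft_idx[OF injU, of i x w] by simp
      ultimately show False using b(1) by simp
    qed
  qed
  have \<mu>eq: "\<mu> = \<mu>W" using uniq st\<mu> st\<mu>W by blast
  define ksW where "ksW s = ks ?\<sigma> ?PF s" for s
  define N where "N = (\<Sum>i\<in>UNIV. length (?\<sigma> i))"
  have kWN: "kW = ksW N" unfolding kW_def ksW_def N_def by (rule da_final_ks)
  have ksmono: "ksW s w \<le> ksW s' w" if "s \<le> s'" for s s' w
    unfolding ksW_def using ks_mono[OF that] .
  have ksSuc: "ksW (Suc s) w \<le> Suc (ksW s w)" for s w unfolding ksW_def by (rule ks_Suc_le)
  have ksSucp: "ksW (Suc s) w = (if rejected ?\<sigma> ?PF (ksW s) w then Suc (ksW s w) else ksW s w)" for s w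
    unfolding ksW_def by (rule ks_Suc_p)
  have ks0: "ksW 0 w = 0" for w by (simp add: ksW_def)
  define rW where "rW w = (LEAST s. ksW s w = kW w)" for w
  have rW1: "ksW (rW w) w = kW w" for w
    unfolding rW_def by (rule LeastI[of _ N]) (simp add: kWN)
  have rW2: "rW w \<le> N" for w
    unfolding rW_def by (rule Least_le) (simp add: kWN)
  define r where "r = Max (rW ` Wp)"
  have rin: "r \<in> rW ` Wp" unfolding r_def using finW jW by (intro Max_in) auto
  then obtain w0 where w0: "w0 \<in> Wp" "rW w0 = r" by blast
  have rge: "rW w \<le> r" if "w \<in> Wp" for w unfolding r_def using finW that by (intro Max_ge) auto
  obtain w'' where w'': "w'' \<in> Wp" "\<nu> w'' = \<mu> w0" and "\<exists>f. \<mu> w0 = Some f" using F4[OF w0(1)] by blast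
  then obtain f where f: "\<mu> w0 = Some f" by blast
  have \<nu>w'': "\<nu> w'' = Some f" using w'' f by simp
  have k0: "kW w0 < length (?\<sigma> w0)" "?\<sigma> w0 ! kW w0 = f"
    using f unfolding \<mu>eq by (auto simp: \<mu>W_def split: if_splits)
  have mWf: "mW f = Some w0" using mWh[OF k0(1)] k0(2) by simp
  have kpos: "0 < kW w0"
  proof -
    obtain f1 where f1: "\<nu> w0 = Some f1" "wutil uw \<nu> w0 = uw f1 w0" using F1[OF w0(1)] by blast
    have "wutil uw \<mu>W w0 < uw f1 w0" using w0(1) f1(2) \<mu>eq by (simp add: Wp_def)
    from pref1[OF this] show ?thesis by simp
  qed
  have rpos: "0 < r"
  proof (rule ccontr)
    assume "\<not> 0 < r"
    then have "r = 0" by simp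
    then have "ksW 0 w0 = kW w0" using rW1[of w0] w0(2) by simp
    then show False using ks0 kpos by simp
  qed
  have rN: "r \<le> N" using rW2[of w0] w0(2) by simp
  have prev: "ksW (r - 1) w0 = kW w0 - 1"
  proof -
    have "r - 1 < rW w0" using rpos w0(2) by simp
    then have ne: "ksW (r - 1) w0 \<noteq> kW w0" unfolding rW_def by (rule not_less_Least)
    have "ksW (r - 1) w0 \<le> kW w0" using ksmono[of "r - 1" N w0] rN kWN by simp
    moreover have "kW w0 \<le> Suc (ksW (r - 1) w0)" using ksSuc[of "r - 1" w0] rpos rW1[of w0] w0(2) by simp
    ultimately show ?thesis using ne by simp
  qed
  define pos where "pos = idx (?\<sigma> w'') f"
  have posk: "pos < kW w''"
  proof -
    have "wutil uw \<mu>W w'' < wutil uw \<nu> w''" using w''(1) \<mu>eq by (simp add: Wp_def)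
    also have "\<dots> = uw f w''" using wutil_Some[of \<nu> w'' f uw, OF \<nu>w''] .
    finally show ?thesis unfolding pos_def by (rule pref1)
  qed
  define t where "t = (LEAST s. pos < ksW s w'')"
  have t1: "pos < ksW t w''" unfolding t_def by (rule LeastI[of _ N]) (use posk kWN in simp)
  have t2: "t \<le> rW w''" unfolding t_def by (rule Least_le) (use posk rW1[of w''] in simp)
  have tpos: "0 < t" using t1 ks0[of w''] by (cases t) auto
  have t3: "ksW (t - 1) w'' \<le> pos"
  proof -
    have "t - 1 < t" using tpos by simp
    then have "\<not> pos < ksW (t - 1) w''" unfolding t_def by (rule not_less_Least)
    then show ?thesis by simp
  qed
  have t4: "ksW t w'' \<le> Suc (ksW (t - 1) w'')" using ksSuc[of "t - 1" w''] tpos by simp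
  have kpos': "ksW (t - 1) w'' = pos" using t1 t3 t4 by simp
  have rej: "rejected ?\<sigma> ?PF (ksW (t - 1)) w''"
  proof (rule ccontr)
    assume "\<not> ?thesis"
    then have "ksW (Suc (t - 1)) w'' = ksW (t - 1) w''" using ksSucp by simp
    then show False using t1 t3 tpos by simp
  qed
  have fpos: "?\<sigma> w'' ! pos = f" unfolding pos_def using nth_idx[OF set\<sigma>] .
  have pr: "proposes ?\<sigma> (ksW (t - 1)) w'' f" and nh: "held ?\<sigma> ?PF (ksW (t - 1)) f \<noteq> Some w''"
    using rej kpos' fpos by (auto simp: rejected_def proposes_def)
  obtain x where x: "held ?\<sigma> ?PF (ksW (t - 1)) f = Some x"
    using held_ex[of w'' ?PF f ?\<sigma> "ksW (t - 1)"] setPF pr by blast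
  have xle: "idx (?PF f) x \<le> idx (?PF f) w''" using held_first[OF x setPF pr] .
  have xlt: "idx (?PF f) x < idx (?PF f) w''"
  proof -
    have "x \<noteq> w''" using x nh by auto
    then have "idx (?PF f) x \<noteq> idx (?PF f) w''" using idx_inj[OF setPF setPF] by blast
    then show ?thesis using xle by simp
  qed
  have tr: "t - 1 \<le> r - 1" using t2 rge[OF w''(1)] by simp
  obtain y where y: "held ?\<sigma> ?PF (ksW (r - 1)) f = Some y" "idx (?PF f) y \<le> idx (?PF f) x"
    using held_ks_mono[OF tr, of ?\<sigma> ?PF f x] x unfolding ksW_def by blast
  have ypr: "ksW (r - 1) y < length (?\<sigma> y)" "?\<sigma> y ! ksW (r - 1) y = f"
    using held_Some[OF y(1)] by (auto simp: proposes_def)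
  have ynr: "\<not> rejected ?\<sigma> ?PF (ksW (r - 1)) y" using held_not_rejected[OF y(1)] .
  have ykr: "ksW r y = ksW (r - 1) y" using ksSucp[of "r - 1" y] ynr rpos by simp
  have yw0: "y \<noteq> w0"
  proof
    assume "y = w0"
    then have "?\<sigma> w0 ! (kW w0 - 1) = ?\<sigma> w0 ! kW w0" using ypr(2) prev k0(2) by simp
    moreover have "kW w0 - 1 < length (?\<sigma> w0)" using k0(1) by simp
    ultimately have "kW w0 - 1 = kW w0" using nth_eq_iff_index_eq[OF dist\<sigma> _ k0(1)] by blast
    then show False using kpos by simp
  qed
  have ygt: "ksW r y < kW y"
  proof -
    have le: "ksW r y \<le> kW y" using ksmono[OF rN, of y] kWN by simp
    have "ksW r y \<noteq> kW y"
    proof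
      assume e: "ksW r y = kW y"
      then have "kW y < length (?\<sigma> y)" "?\<sigma> y ! kW y = f" using ypr ykr by auto
      then have "mW f = Some y" using mWh by metis
      then show False using mWf yw0 by simp
    qed
    then show ?thesis using le by simp
  qed
  have ynW: "y \<notin> Wp"
  proof
    assume "y \<in> Wp"
    then have "rW y \<le> r" by (rule rge)
    then have "kW y \<le> ksW r y" using ksmono[of "rW y" r y] rW1[of y] by simp
    then show False using ygt by simp
  qed
  have yj: "y \<noteq> j" using ynW jW by blast
  have iy: "idx (?\<sigma> y) f = ksW r y" using idx_nth[OF dist\<sigma> ypr(1)] ypr(2) ykr by simp
  have u1: "wutil uw \<mu> y < uw f y" using pref2[of y f] iy ygt \<mu>eq by simp
  have u2: "wutil uw \<nu> y < uw f y" using u1 ynW by (simp add: Wp_def)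
  have u3: "futil U \<nu> f = U f w''" using futil_Some[OF mat\<nu> \<nu>w'', of U] .
  have u4: "U f w'' < U f y" using ft_idx[OF injU, of f y w''] y(2) xlt by simp
  show False using block\<nu>[OF yj, of f] u2 u3 u4 by simp
qed



definition sing :: "('w \<Rightarrow> 'f option) \<Rightarrow> 'w \<Rightarrow> 'f list" where
  "sing \<mu> w = (case \<mu> w of None \<Rightarrow> [] | Some i \<Rightarrow> [i])"

lemma sing_valid: "valid_profile (sing \<mu>)"
  unfolding valid_profile_def sing_def by (auto split: option.splits)

lemma sing_in: "w \<noteq> j \<Longrightarrow> i \<in> set (((sing \<mu>)(j := X)) w) \<Longrightarrow> \<mu> w = Some i"
  unfolding sing_def by (auto split: option.splits)

lemma sing_self: "w \<noteq> j \<Longrightarrow> \<mu> w = Some i \<Longrightarrow> i \<in> set (((sing \<mu>)(j := X)) w)"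
  unfolding sing_def by simp

lemma single_rstab:
  assumes rs: "rstab U (\<sigma>(j := X)) \<mu>"
  shows "rstab U ((sing \<mu>)(j := X)) \<mu>"
proof -
  have mat: "is_matching \<mu>" using rstab_mat[OF rs] .
  have ir: "\<forall>w i. \<mu> w = Some i \<longrightarrow> i \<in> set (((sing \<mu>)(j := X)) w)"
  proof (intro allI impI)
    fix w i assume a: "\<mu> w = Some i"
    show "i \<in> set (((sing \<mu>)(j := X)) w)"
    proof (cases "w = j")
      case True
      then show ?thesis using rstab_ir[OF rs a] by simp
    next
      case False then show ?thesis using sing_self[of w j \<mu> i X, OF False a] by simp
    qed
  qed
  have bl: "\<forall>i w. futil U \<mu> i < U i w \<longrightarrow> i \<in> set (((sing \<mu>)(j := X)) w) \<longrightarrow>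
      (\<exists>i'. \<mu> w = Some i' \<and> idx (((sing \<mu>)(j := X)) w) i' < idx (((sing \<mu>)(j := X)) w) i)"
  proof (intro allI impI)
    fix i w assume f: "futil U \<mu> i < U i w" and iin: "i \<in> set (((sing \<mu>)(j := X)) w)"
    show "\<exists>i'. \<mu> w = Some i' \<and> idx (((sing \<mu>)(j := X)) w) i' < idx (((sing \<mu>)(j := X)) w) i"
    proof (cases "w = j")
      case True
      then have "i \<in> set ((\<sigma>(j := X)) w)" using iin by simp
      from rstab_bl[OF rs f this] show ?thesis using True by simp
    next
      case False
      then have "\<mu> w = Some i" using sing_in[of w j i \<mu> X, OF False iin] by blast
      then have "futil U \<mu> i = U i w" using futil_Some[OF mat, of w i U] by simp
      then show ?thesis using f by simp
    qed
  qed
  show ?thesis unfolding rstab_def using mat ir bl by blast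
qed

lemma partner_sub:
  assumes "rstab U ((sing \<mu>)(j := X)) \<rho>" "\<rho> w = Some i" "w \<noteq> j"
  shows "\<mu> w = Some i"
  using rstab_ir[OF assms(1,2)] sing_in[of w j i \<mu> X, OF assms(3)] by blast

lemma opt_keeps:
  assumes rs: "rstab U ((sing \<mu>)(j := X)) \<rho>" and mat: "is_matching \<mu>" and h: "\<mu> j = Some h"
    and le: "futil U \<mu> h \<le> futil U \<rho> h" and posU: "\<forall>i j. U i j > 0"
  shows "\<rho> j = Some h"
proof -
  have "futil U \<mu> h = U h j" using futil_Some[OF mat h, of U] .
  then have gt: "0 < futil U \<rho> h" using le posU by (metis less_le_trans)
  have "\<exists>w. \<rho> w = Some h"
  proof (rule ccontr)
    assume "\<not> ?thesis"
    then have "futil U \<rho> h = 0" using futil_None[of \<rho> h U] by blast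
    then show False using gt by simp
  qed
  then obtain w where w: "\<rho> w = Some h" by blast
  show ?thesis
  proof (cases "w = j")
    case True then show ?thesis using w by simp
  next
    case False
    then have "\<mu> w = Some h" using partner_sub[OF rs w] by blast
    then have "w = j" using h mat unfolding is_matching_def by blast
    then show ?thesis using False by simp
  qed
qed


lemma undom_core:
  fixes U :: "'f::finite \<Rightarrow> 'w::finite \<Rightarrow> real" and uw :: "'f \<Rightarrow> 'w \<Rightarrow> real"
  assumes injU: "\<forall>i. inj (U i)" and posU: "\<forall>i j. U i j > 0"
    and injW: "\<forall>j. inj (\<lambda>i. uw i j)" and posW: "\<forall>i j. uw i j > 0"
    and dom: "\<forall>\<sigma>'. valid_profile \<sigma>' \<longrightarrow>
       wutil uw (DA (firm_truth U) (\<sigma>'(j := wl uw j))) j \<le> wutil uw (DA (firm_truth U) (\<sigma>'(j := L'))) j"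
  shows "wutil uw (DA (firm_truth U) (\<sigma>0(j := L'))) j \<le> wutil uw (DA (firm_truth U) (\<sigma>0(j := wl uw j))) j"
proof (rule ccontr)
  let ?PF = "firm_truth U"
  let ?T = "wl uw j"
  define \<nu>T where "\<nu>T = DA ?PF (\<sigma>0(j := ?T))"
  define \<nu>L where "\<nu>L = DA ?PF (\<sigma>0(j := L'))"
  assume "\<not> wutil uw \<nu>L j \<le> wutil uw \<nu>T j"
  then have gain: "wutil uw \<nu>T j < wutil uw \<nu>L j" by simp
  have rsT: "rstab U (\<sigma>0(j := ?T)) \<nu>T" unfolding \<nu>T_def by (rule rstab_DA[OF injU posU])
  have rsL: "rstab U (\<sigma>0(j := L')) \<nu>L" unfolding \<nu>L_def by (rule rstab_DA[OF injU posU])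
  have matT: "is_matching \<nu>T" using rstab_mat[OF rsT] .
  have matL: "is_matching \<nu>L" using rstab_mat[OF rsL] .
  have Tj: "(\<sigma>'(j := ?T)) j = wl uw j" for \<sigma>' :: "'w \<Rightarrow> 'f list" by simp
  define \<sigma>1 where "\<sigma>1 = sing \<nu>T"
  define \<rho> where "\<rho> = DA ?PF (\<sigma>1(j := ?T))"
  define \<rho>' where "\<rho>' = DA ?PF (\<sigma>1(j := L'))"
  have rs1: "rstab U (\<sigma>1(j := ?T)) \<nu>T" unfolding \<sigma>1_def by (rule single_rstab[OF rsT])
  have rs\<rho>: "rstab U (\<sigma>1(j := ?T)) \<rho>" unfolding \<rho>_def by (rule rstab_DA[OF injU posU])
  have rs\<rho>': "rstab U (\<sigma>1(j := L')) \<rho>'" unfolding \<rho>'_def by (rule rstab_DA[OF injU posU])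
  have mat\<rho>': "is_matching \<rho>'" using rstab_mat[OF rs\<rho>'] .
  have fo1: "futil U \<nu>T i \<le> futil U \<rho> i" for i unfolding \<rho>_def by (rule DA_fopt[OF injU posU rs1])
  have w1: "wutil uw \<nu>T j \<le> wutil uw \<rho> j"
  proof (cases "\<nu>T j")
    case None then show ?thesis using wutil_nonneg[OF posW] by (simp add: wutil_def)
  next
    case (Some h)
    have "\<rho> j = Some h" by (rule opt_keeps[OF rs\<rho>[unfolded \<sigma>1_def] matT Some fo1 posU])
    then show ?thesis using Some by (simp add: wutil_def)
  qed
  have d1: "wutil uw \<rho> j \<le> wutil uw \<rho>' j"
    using dom sing_valid[of \<nu>T] unfolding \<rho>_def \<rho>'_def \<sigma>1_def by blast
  have eq\<rho>': "\<rho>' j = \<nu>T j"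
  proof (cases "\<rho>' j")
    case None
    show ?thesis
    proof (cases "\<nu>T j")
      case None2: None then show ?thesis using None by simp
    next
      case (Some h)
      then have "wutil uw \<nu>T j = uw h j" by (simp add: wutil_def)
      moreover have "wutil uw \<rho>' j = 0" using None by (simp add: wutil_def)
      ultimately show ?thesis using w1 d1 posW by (metis not_le order_trans)
    qed
  next
    case (Some x)
    show ?thesis
    proof (rule ccontr)
      assume ne: "\<rho>' j \<noteq> \<nu>T j"
      then have ne': "\<nu>T j \<noteq> Some x" using Some by simp
      have ux: "wutil uw \<rho>' j = uw x j" using Some by (simp add: wutil_def)
      have gt: "wutil uw \<nu>T j < uw x j"
      proof (cases "\<nu>T j")
        case None then show ?thesis using posW by (simp add: wutil_def)
      next
        case (Some h)
        then have "h \<noteq> x" using ne' by simp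
        then have "uw h j \<noteq> uw x j" using injW by (metis injD)
        moreover have "wutil uw \<nu>T j = uw h j" using Some by (simp add: wutil_def)
        ultimately show ?thesis using w1 d1 ux by simp
      qed
      have fx: "\<not> futil U \<nu>T x < U x j"
        using rstab_block[OF rsT Tj injW, of x] gt by blast
      have "\<exists>w. \<nu>T w = Some x"
      proof (rule ccontr)
        assume "\<not> ?thesis"
        then have "futil U \<nu>T x = 0" using futil_None[of \<nu>T x U] by blast
        then show False using fx posU by simp
      qed
      then obtain w where w: "\<nu>T w = Some x" by blast
      have wj: "w \<noteq> j" using w ne' by auto
      have fw: "futil U \<nu>T x = U x w" using futil_Some[OF matT w, of U] .
      have "U x w \<noteq> U x j" using wj injU by (metis injD)
      then have Ult: "U x j < U x w" using fx fw by simp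
      have \<rho>'w: "\<rho>' w = None"
      proof (cases "\<rho>' w")
        case None then show ?thesis .
      next
        case (Some i)
        then have "\<nu>T w = Some i" using partner_sub[OF rs\<rho>'[unfolded \<sigma>1_def] Some wj] by blast
        then have "i = x" using w by simp
        then have "\<rho>' w = \<rho>' j" using Some \<open>\<rho>' j = Some x\<close> by simp
        then have "w = j" using mat\<rho>' Some \<open>i = x\<close> unfolding is_matching_def by metis
        then show ?thesis using wj by simp
      qed
      have f\<rho>': "futil U \<rho>' x = U x j" using futil_Some[OF mat\<rho>' Some, of U] .
      have xin: "x \<in> set ((\<sigma>1(j := L')) w)"
        unfolding \<sigma>1_def using sing_self[of w j \<nu>T x L', OF wj w] .
      from rstab_bl[OF rs\<rho>' _ xin] f\<rho>' Ult \<rho>'w show False by simp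
    qed
  qed
  have rsTL: "rstab U (\<sigma>0(j := L')) \<nu>T"
  proof -
    have ir: "\<forall>w i. \<nu>T w = Some i \<longrightarrow> i \<in> set ((\<sigma>0(j := L')) w)"
    proof (intro allI impI)
      fix w i assume a: "\<nu>T w = Some i"
      show "i \<in> set ((\<sigma>0(j := L')) w)"
      proof (cases "w = j")
        case True
        then have "\<rho>' j = Some i" using a eq\<rho>' by simp
        from rstab_ir[OF rs\<rho>' this] show ?thesis using True by simp
      next
        case False
        from rstab_ir[OF rsT a] show ?thesis using False by simp
      qed
    qed
    have bl: "\<forall>i w. futil U \<nu>T i < U i w \<longrightarrow> i \<in> set ((\<sigma>0(j := L')) w) \<longrightarrow>
      (\<exists>i'. \<nu>T w = Some i' \<and> idx ((\<sigma>0(j := L')) w) i' < idx ((\<sigma>0(j := L')) w) i)"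
    proof (intro allI impI)
      fix i w assume f: "futil U \<nu>T i < U i w" and iin: "i \<in> set ((\<sigma>0(j := L')) w)"
      show "\<exists>i'. \<nu>T w = Some i' \<and> idx ((\<sigma>0(j := L')) w) i' < idx ((\<sigma>0(j := L')) w) i"
      proof (cases "w = j")
        case False
        then have "i \<in> set ((\<sigma>0(j := ?T)) w)" using iin by simp
        from rstab_bl[OF rsT f this] show ?thesis using False by simp
      next
        case True
        have iL: "i \<in> set L'" using iin True by simp
        have "futil U \<rho>' i < U i j"
        proof (cases "\<exists>w'. \<rho>' w' = Some i")
          case True
          then obtain w' where w': "\<rho>' w' = Some i" by blast
          show ?thesis
          proof (cases "w' = j")
            case True
            then have "\<nu>T j = Some i" using w' eq\<rho>' by simp
            then have "futil U \<nu>T i = U i j" using futil_Some[OF matT, of j i U] by simp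
            then show ?thesis using f \<open>w = j\<close> by simp
          next
            case False
            then have "\<nu>T w' = Some i" using partner_sub[OF rs\<rho>'[unfolded \<sigma>1_def] w'] by blast
            then have "futil U \<nu>T i = U i w'" using futil_Some[OF matT, of w' i U] by simp
            moreover have "futil U \<rho>' i = U i w'" using futil_Some[OF mat\<rho>' w', of U] .
            ultimately show ?thesis using f \<open>w = j\<close> by simp
          qed
        next
          case False
          then have "futil U \<rho>' i = 0" using futil_None[of \<rho>' i U] by blast
          then show ?thesis using posU by simp
        qed
        moreover have "i \<in> set ((\<sigma>1(j := L')) j)" using iL by simp
        ultimately obtain i' where "\<rho>' j = Some i'" "idx ((\<sigma>1(j := L')) j) i' < idx ((\<sigma>1(j := L')) j) i"
          using rstab_bl[OF rs\<rho>'] by blast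
        then show ?thesis using eq\<rho>' True by simp
      qed
    qed
    show ?thesis unfolding rstab_def using matT ir bl by blast
  qed
  have foA: "futil U \<nu>T i \<le> futil U \<nu>L i" for i unfolding \<nu>L_def by (rule DA_fopt[OF injU posU rsTL])
  obtain g where g: "\<nu>L j = Some g"
  proof (cases "\<nu>L j")
    case None
    then have "wutil uw \<nu>L j = 0" by (simp add: wutil_def)
    then show ?thesis using gain wutil_nonneg[OF posW, of \<nu>T j] by simp
  next
    case (Some g) then show ?thesis using that by blast
  qed
  have ug: "wutil uw \<nu>L j = uw g j" using g by (simp add: wutil_def)
  define \<sigma>2 where "\<sigma>2 = sing \<nu>L"
  define \<rho>2 where "\<rho>2 = DA ?PF (\<sigma>2(j := ?T))"
  define \<rho>2' where "\<rho>2' = DA ?PF (\<sigma>2(j := L'))"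
  have rs2: "rstab U (\<sigma>2(j := L')) \<nu>L" unfolding \<sigma>2_def by (rule single_rstab[OF rsL])
  have rs\<rho>2: "rstab U (\<sigma>2(j := ?T)) \<rho>2" unfolding \<rho>2_def by (rule rstab_DA[OF injU posU])
  have rs\<rho>2': "rstab U (\<sigma>2(j := L')) \<rho>2'" unfolding \<rho>2'_def by (rule rstab_DA[OF injU posU])
  have mat\<rho>2: "is_matching \<rho>2" using rstab_mat[OF rs\<rho>2] .
  have fo2: "futil U \<nu>L i \<le> futil U \<rho>2' i" for i unfolding \<rho>2'_def by (rule DA_fopt[OF injU posU rs2])
  have \<rho>2'j: "\<rho>2' j = Some g" by (rule opt_keeps[OF rs\<rho>2'[unfolded \<sigma>2_def] matL g fo2 posU])
  have d2: "wutil uw \<rho>2 j \<le> uw g j"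
  proof -
    have "wutil uw \<rho>2 j \<le> wutil uw \<rho>2' j"
      using dom sing_valid[of \<nu>L] unfolding \<rho>2_def \<rho>2'_def \<sigma>2_def by blast
    then show ?thesis using \<rho>2'j by (simp add: wutil_def)
  qed
  have rsLT: "rstab U (\<sigma>0(j := ?T)) \<nu>L"
  proof -
    have ir: "\<forall>w i. \<nu>L w = Some i \<longrightarrow> i \<in> set ((\<sigma>0(j := ?T)) w)"
    proof (intro allI impI)
      fix w i assume a: "\<nu>L w = Some i"
      show "i \<in> set ((\<sigma>0(j := ?T)) w)"
      proof (cases "w = j")
        case True then show ?thesis using wl_set[OF injW, of i j] by simp
      next
        case False
        from rstab_ir[OF rsL a] show ?thesis using False by simp
      qed
    qed
    have bl: "\<forall>i w. futil U \<nu>L i < U i w \<longrightarrow> i \<in> set ((\<sigma>0(j := ?T)) w) \<longrightarrow>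
      (\<exists>i'. \<nu>L w = Some i' \<and> idx ((\<sigma>0(j := ?T)) w) i' < idx ((\<sigma>0(j := ?T)) w) i)"
    proof (intro allI impI)
      fix i w assume f: "futil U \<nu>L i < U i w" and iin: "i \<in> set ((\<sigma>0(j := ?T)) w)"
      show "\<exists>i'. \<nu>L w = Some i' \<and> idx ((\<sigma>0(j := ?T)) w) i' < idx ((\<sigma>0(j := ?T)) w) i"
      proof (cases "w = j")
        case False
        then have "i \<in> set ((\<sigma>0(j := L')) w)" using iin by simp
        from rstab_bl[OF rsL f this] show ?thesis using False by simp
      next
        case True
        have "uw i j < uw g j"
        proof (rule ccontr)
          assume nl: "\<not> uw i j < uw g j"
          have ig: "i \<noteq> g"
          proof
            assume "i = g"
            then have "futil U \<nu>L i = U i j" using futil_Some[OF matL g, of U] by simp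
            then show False using f \<open>w = j\<close> by simp
          qed
          then have "uw i j \<noteq> uw g j" using injW by (metis injD)
          then have ugi: "uw g j < uw i j" using nl by simp
          have n\<rho>2: "\<rho>2 j \<noteq> Some i"
          proof
            assume "\<rho>2 j = Some i"
            then have "wutil uw \<rho>2 j = uw i j" by (simp add: wutil_def)
            then show False using d2 ugi by simp
          qed
          have fu: "futil U \<rho>2 i < U i j"
          proof (cases "\<exists>w'. \<rho>2 w' = Some i")
            case True
            then obtain w' where w': "\<rho>2 w' = Some i" by blast
            have w'j: "w' \<noteq> j" using w' n\<rho>2 by auto
            then have "\<nu>L w' = Some i" using partner_sub[OF rs\<rho>2[unfolded \<sigma>2_def] w'] by blast
            then have "futil U \<nu>L i = U i w'" using futil_Some[OF matL, of w' i U] by simp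
            moreover have "futil U \<rho>2 i = U i w'" using futil_Some[OF mat\<rho>2 w', of U] .
            ultimately show ?thesis using f \<open>w = j\<close> by simp
          next
            case False
            then have "futil U \<rho>2 i = 0" using futil_None[of \<rho>2 i U] by blast
            then show ?thesis using posU by simp
          qed
          have "wutil uw \<rho>2 j < uw i j" using d2 ugi by simp
          then show False using rstab_block[OF rs\<rho>2 Tj injW fu] by blast
        qed
        then have "idx ?T g < idx ?T i" using wl_idx[OF injW, of j g i] by simp
        then show ?thesis using g True by simp
      qed
    qed
    show ?thesis unfolding rstab_def using matL ir bl by blast
  qed
  have foB: "futil U \<nu>L i \<le> futil U \<nu>T i" for i unfolding \<nu>T_def by (rule DA_fopt[OF injU posU rsLT])
  have "futil U \<nu>T g = U g j" using foA[of g] foB[of g] futil_Some[OF matL g, of U] by simp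
  then have pos: "0 < futil U \<nu>T g" using posU by simp
  have "\<exists>w. \<nu>T w = Some g"
  proof (rule ccontr)
    assume "\<not> ?thesis"
    then have "futil U \<nu>T g = 0" using futil_None[of \<nu>T g U] by blast
    then show False using pos by simp
  qed
  then obtain w where w: "\<nu>T w = Some g" by blast
  have "U g w = U g j" using futil_Some[OF matT w, of U] \<open>futil U \<nu>T g = U g j\<close> by simp
  then have "w = j" using injU by (metis injD)
  then have "wutil uw \<nu>T j = uw g j" using w by (simp add: wutil_def)
  then show False using gain ug by simp
qed



theorem proposition0:
  fixes uf :: "'th::finite \<Rightarrow> 'f::finite \<Rightarrow> 'w::finite \<Rightarrow> real"
    and uw :: "'f \<Rightarrow> 'w \<Rightarrow> real"
    and Psi :: "'th \<Rightarrow> real"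
  assumes prior_pos: "\<forall>th. Psi th > 0"
    and prior_sum: "(\<Sum>th\<in>UNIV. Psi th) = 1"
    and firm_pos: "\<forall>th i j. uf th i j > 0"
    and worker_pos: "\<forall>i j. uw i j > 0"
    and firm_strict: "\<forall>th i. inj (uf th i)"
    and worker_strict: "\<forall>j. inj (\<lambda>i. uw i j)"
    and unique_stable: "\<forall>th. \<exists>!\<mu>. stable (uf th) uw \<mu>"
  shows "\<exists>\<sigma>. is_BNE uf uw Psi \<sigma>
            \<and> (\<forall>j. \<not> weakly_dominated uf uw j (\<sigma> j))
            \<and> (\<forall>th. stable (uf th) uw (outcome uf \<sigma> th))"
proof (intro exI conjI)
  let ?\<sigma> = "wl uw :: 'w \<Rightarrow> 'f list"
  have injU: "\<forall>i. inj (uf th i)" for th using firm_strict by blast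
  have posU: "\<forall>i j. uf th i j > 0" for th using firm_pos by blast
  show st: "\<forall>th. stable (uf th) uw (outcome uf ?\<sigma> th)"
  proof
    fix th
    have "rstab (uf th) ?\<sigma> (DA (firm_truth (uf th)) ?\<sigma>)" by (rule rstab_DA[OF injU posU])
    then show "stable (uf th) uw (outcome uf ?\<sigma> th)"
      unfolding outcome_def by (rule stable_of_rstab[OF _ _ worker_strict posU worker_pos]) simp
  qed
  show "is_BNE uf uw Psi ?\<sigma>"
    unfolding is_BNE_def
  proof (intro conjI allI impI)
    show "valid_profile ?\<sigma>" unfolding valid_profile_def using wl_distinct[OF worker_strict] by blast
    fix j and L :: "'f list" assume dL: "distinct L"
    show "exp_util uf uw Psi (?\<sigma>(j := L)) j \<le> exp_util uf uw Psi ?\<sigma> j"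
      unfolding exp_util_def
    proof (rule sum_mono)
      fix th assume "th \<in> (UNIV :: 'th set)"
      have "wutil uw (outcome uf (?\<sigma>(j := L)) th) j \<le> wutil uw (outcome uf ?\<sigma> th) j"
        unfolding outcome_def
        by (rule manip[OF injU posU worker_strict worker_pos _ dL]) (use unique_stable in blast)
      then show "Psi th * wutil uw (outcome uf (?\<sigma>(j := L)) th) j \<le> Psi th * wutil uw (outcome uf ?\<sigma> th) j"
        using prior_pos by (simp add: mult_left_mono less_imp_le)
    qed
  qed
  show "\<forall>j. \<not> weakly_dominated uf uw j (?\<sigma> j)"
  proof (intro allI notI)
    fix j assume "weakly_dominated uf uw j (?\<sigma> j)"
    then obtain L' where
      dom: "\<forall>th \<sigma>. valid_profile \<sigma> \<longrightarrow>
        wutil uw (outcome uf (\<sigma>(j := ?\<sigma> j)) th) j \<le> wutil uw (outcome uf (\<sigma>(j := L')) th) j"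
      and str: "\<exists>th \<sigma>. valid_profile \<sigma> \<and>
        wutil uw (outcome uf (\<sigma>(j := ?\<sigma> j)) th) j < wutil uw (outcome uf (\<sigma>(j := L')) th) j"
      unfolding weakly_dominated_def by blast
    from str obtain th0 \<sigma>0 where s0: "valid_profile \<sigma>0"
      "wutil uw (outcome uf (\<sigma>0(j := ?\<sigma> j)) th0) j < wutil uw (outcome uf (\<sigma>0(j := L')) th0) j"
      by blast
    have dom0: "\<forall>\<sigma>'. valid_profile \<sigma>' \<longrightarrow>
       wutil uw (DA (firm_truth (uf th0)) (\<sigma>'(j := wl uw j))) j \<le> wutil uw (DA (firm_truth (uf th0)) (\<sigma>'(j := L'))) j"
      using dom unfolding outcome_def by blast
    have "wutil uw (DA (firm_truth (uf th0)) (\<sigma>0(j := L'))) j \<le> wutil uw (DA (firm_truth (uf th0)) (\<sigma>0(j := wl uw j))) j"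
      by (rule undom_core[OF injU posU worker_strict worker_pos dom0])
    then show False using s0(2) unfolding outcome_def by simp
  qed
qed

end
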